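(* Assume Schanuel's conjecture $(S)$. Then the numbers $\sqrt{2}^{\,\sqrt{2}^{\,\sqrt{2}}}$, $i^{\,i^{\,i}}$, and $i^{\,e^{\pi}}$ are transcendental.
   Context: Schanuel's conjecture $(S)$: if $\alpha_1,\dots,\alpha_n\in\mathbb{C}$ are linearly independent over $\mathbb{Q}$, then the transcendence degree of $\mathbb{Q}(\alpha_1,\dots,\alpha_n,e^{\alpha_1},\dots,e^{\alpha_n})$ over $\mathbb{Q}$ is at least $n$. Here $i=\sqrt{-1}$, towers are read from the top ($a^{b^{c}}=a^{(b^c)}$), and complex powers use the principal logarithm, $a^b=e^{b\,\mathrm{Log}\,a}$ (so $\mathrm{Log}\, i=\pi i/2$). *)

theory Defs
  imports "HOL-Analysis.Analysis" "HOL-Computational_Algebra.Polynomial"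
begin

definition lin_indep_Q :: "complex list \<Rightarrow> bool" where
  "lin_indep_Q xs \<longleftrightarrow>
     (\<forall>q :: nat \<Rightarrow> rat. (\<Sum>i<length xs. of_rat (q i) * xs ! i) = 0 \<longrightarrow> (\<forall>i<length xs. q i = 0))"

text \<open>A polynomial is given by a finite set E of exponent vectors and coefficients c.\<close>
definition alg_indep_Q :: "complex list \<Rightarrow> bool" where
  "alg_indep_Q xs \<longleftrightarrow>
     (\<forall>(E :: (nat \<Rightarrow> nat) set) (c :: (nat \<Rightarrow> nat) \<Rightarrow> rat).
        finite E \<and> (\<forall>\<alpha>\<in>E. \<forall>i. length xs \<le> i \<longrightarrow> \<alpha> i = 0) \<and>
        (\<Sum>\<alpha>\<in>E. of_rat (c \<alpha>) * (\<Prod>i<length xs. (xs ! i) ^ \<alpha> i)) = 0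
        \<longrightarrow> (\<forall>\<alpha>\<in>E. c \<alpha> = 0))"

definition subfield_C :: "complex set \<Rightarrow> bool" where
  "subfield_C F \<longleftrightarrow> 0 \<in> F \<and> 1 \<in> F \<and>
     (\<forall>x\<in>F. \<forall>y\<in>F. x + y \<in> F \<and> x - y \<in> F \<and> x * y \<in> F) \<and>
     (\<forall>x\<in>F. x \<noteq> 0 \<longrightarrow> inverse x \<in> F)"

definition gen_field :: "complex set \<Rightarrow> complex set" where
  "gen_field S = \<Inter>{F. subfield_C F \<and> S \<subseteq> F}"

definition trdeg_ge :: "complex set \<Rightarrow> nat \<Rightarrow> bool" where
  "trdeg_ge K n \<longleftrightarrow> (\<exists>xs. distinct xs \<and> set xs \<subseteq> K \<and> length xs = n \<and> alg_indep_Q xs)"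

definition schanuel :: bool where
  "schanuel \<longleftrightarrow> (\<forall>xs :: complex list. lin_indep_Q xs \<longrightarrow>
      trdeg_ge (gen_field (set xs \<union> exp ` set xs)) (length xs))"

end

theory Submission
  imports Defs "HOL-Computational_Algebra.Primes"
begin


interpretation Q: vector_space "\<lambda>(q::rat) (x::complex). of_rat q * x"
  by standard (auto simp: algebra_simps of_rat_add of_rat_mult)

lemma span_mult:
  assumes "x \<in> Q.span A" "y \<in> Q.span B"
    and "\<And>a b. a \<in> A \<Longrightarrow> b \<in> B \<Longrightarrow> a * b \<in> Q.span C"
  shows "x * y \<in> Q.span C"
proof -
  have inner: "a * y \<in> Q.span C" if a: "a \<in> A" for a
    using assms(2)
  proof (induction rule: Q.span_induct_alt)
    case base then show ?case by (simp add: Q.span_zero)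
  next
    case (step c b z)
    have "a * (of_rat c * b + z) = of_rat c * (a * b) + a * z" by (simp add: algebra_simps)
    then show ?case using step a assms(3) by (simp add: Q.span_add Q.span_scale)
  qed
  show ?thesis using assms(1)
  proof (induction rule: Q.span_induct_alt)
    case base then show ?case by (simp add: Q.span_zero)
  next
    case (step c b z)
    have "(of_rat c * b + z) * y = of_rat c * (b * y) + z * y" by (simp add: algebra_simps)
    then show ?case using step inner by (simp add: Q.span_add Q.span_scale)
  qed
qed

definition mon :: "complex list \<Rightarrow> (nat \<Rightarrow> nat) \<Rightarrow> complex" where
  "mon gs e = (\<Prod>j<length gs. gs ! j ^ e j)"

definition monset :: "complex list \<Rightarrow> (nat \<Rightarrow> nat) \<Rightarrow> complex set" where
  "monset gs D = mon gs ` (PiE {..<length gs} (\<lambda>j. {..<D j}))"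

definition VV :: "complex list \<Rightarrow> (nat \<Rightarrow> nat) \<Rightarrow> complex set" where
  "VV gs D = Q.span (monset gs D)"

lemma mon_cong: "(\<And>j. j < length gs \<Longrightarrow> e j = e' j) \<Longrightarrow> mon gs e = mon gs e'"
  unfolding mon_def by (rule prod.cong) auto

lemma monI: assumes "\<And>j. j < length gs \<Longrightarrow> e j < D j" shows "mon gs e \<in> monset gs D"
proof -
  have "restrict e {..<length gs} \<in> PiE {..<length gs} (\<lambda>j. {..<D j})" using assms by auto
  moreover have "mon gs (restrict e {..<length gs}) = mon gs e" by (rule mon_cong) auto
  ultimately show ?thesis unfolding monset_def by (metis image_eqI)
qed

lemma monsetE:
  assumes "x \<in> monset gs D"
  obtains e where "x = mon gs e" "\<And>j. j < length gs \<Longrightarrow> e j < D j"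
proof -
  from assms obtain f where f: "f \<in> PiE {..<length gs} (\<lambda>j. {..<D j})" "x = mon gs f"
    unfolding monset_def by blast
  show ?thesis by (rule that[OF f(2)]) (use f(1) in \<open>auto simp: PiE_iff\<close>)
qed

lemma mon_mult: "mon gs e * mon gs e' = mon gs (\<lambda>j. e j + e' j)"
  unfolding mon_def by (simp add: power_add prod.distrib)

lemma finite_monset: "finite (monset gs D)"
  unfolding monset_def by (intro finite_imageI finite_PiE) auto

lemma card_monset: "card (monset gs D) \<le> (\<Prod>j<length gs. D j)"
proof -
  have "card (monset gs D) \<le> card (PiE {..<length gs} (\<lambda>j. {..<D j}))"
    unfolding monset_def by (rule card_image_le) (intro finite_PiE, auto)
  also have "\<dots> = (\<Prod>j<length gs. D j)" by (simp add: card_PiE)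
  finally show ?thesis .
qed

lemma VV_mono:
  assumes "\<And>j. j < length gs \<Longrightarrow> D j \<le> D' j"
  shows "VV gs D \<subseteq> VV gs D'"
proof -
  have "monset gs D \<subseteq> monset gs D'"
  proof
    fix x assume "x \<in> monset gs D"
    then obtain e where "x = mon gs e" "\<And>j. j < length gs \<Longrightarrow> e j < D j" by (rule monsetE) auto
    then show "x \<in> monset gs D'" using assms by (metis monI order_less_le_trans)
  qed
  then show ?thesis unfolding VV_def by (rule Q.span_mono)
qed

lemma VV_span: "Q.span (VV gs D) = VV gs D"
  unfolding VV_def by (rule Q.span_span)

lemma VV_mult:
  assumes "x \<in> VV gs D" "y \<in> VV gs D'"
  shows "x * y \<in> VV gs (\<lambda>j. D j + D' j - 1)"
  using assms unfolding VV_def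
proof (rule span_mult)
  fix a b assume "a \<in> monset gs D" "b \<in> monset gs D'"
  then obtain e e' where "a = mon gs e" "\<And>j. j < length gs \<Longrightarrow> e j < D j"
     "b = mon gs e'" "\<And>j. j < length gs \<Longrightarrow> e' j < D' j" by (metis monsetE)
  then have "a * b \<in> monset gs (\<lambda>j. D j + D' j - 1)"
    by (simp add: mon_mult) (rule monI, fastforce)
  then show "a * b \<in> Q.span (monset gs (\<lambda>j. D j + D' j - 1))" by (rule Q.span_base)
qed

lemma mon_single:
  assumes "j < length gs"
  shows "mon gs (\<lambda>i. if i = j then k else 0) = gs ! j ^ k"
proof -
  have "mon gs (\<lambda>i. if i = j then k else 0) = (\<Prod>i<length gs. if i = j then gs ! j ^ k else 1)"
    unfolding mon_def by (rule prod.cong) auto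
  also have "\<dots> = gs ! j ^ k" using assms by (simp add: prod.delta)
  finally show ?thesis .
qed

lemma alg_pow_span:
  fixes a :: complex
  assumes "\<forall>i. coeff p i \<in> \<rat>" "p \<noteq> 0" "poly p a = 0"
  shows "a ^ n \<in> Q.span ((\<lambda>k. a ^ k) ` {..<degree p})"
proof (induction n rule: less_induct)
  case (less n)
  define d where "d = degree p"
  have "\<forall>i. \<exists>q. coeff p i = of_rat q" using assms(1) by (auto elim: Rats_cases)
  then obtain r where r: "\<And>i. coeff p i = of_rat (r i)" by metis
  have lc: "of_rat (r d) \<noteq> (0::complex)" using assms(2) r[of d] d_def by auto
  show ?case
  proof (cases "n < d")
    case True then show ?thesis by (intro Q.span_base) (auto simp: d_def)
  next
    case False
    let ?S = "(\<Sum>k<d. of_rat (r k) * a ^ k)"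
    have "0 = (\<Sum>k\<le>d. coeff p k * a ^ k)" using assms(3) by (simp add: poly_altdef d_def)
    also have "\<dots> = ?S + of_rat (r d) * a ^ d"
      by (simp add: r lessThan_Suc_atMost[symmetric])
    finally have h: "?S + of_rat (r d) * a ^ d = 0" by simp
    then have h2: "of_rat (r d) * a ^ d = - ?S" by (metis add_eq_0_iff)
    have "a ^ d = - ?S / of_rat (r d)" using lc h2 by (simp add: field_simps)
    also have "\<dots> = (\<Sum>k<d. - (of_rat (r k) * a ^ k) / of_rat (r d))"
      by (simp add: sum_divide_distrib sum_negf)
    also have "\<dots> = (\<Sum>k<d. of_rat (- r k / r d) * a ^ k)"
      by (rule sum.cong) (simp_all add: of_rat_divide of_rat_minus)
    finally have ad: "a ^ d = (\<Sum>k<d. of_rat (- r k / r d) * a ^ k)" .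
    have "a ^ n = a ^ (n - d) * a ^ d" using False by (simp add: power_add[symmetric])
    also have "\<dots> = (\<Sum>k<d. of_rat (- r k / r d) * a ^ (n - d + k))"
      unfolding ad by (simp add: sum_distrib_left power_add algebra_simps)
    also have "\<dots> \<in> Q.span ((\<lambda>k. a ^ k) ` {..<degree p})"
      by (intro Q.span_sum Q.span_scale less.IH) (use False in auto)
    finally show ?thesis .
  qed
qed

lemma VV_reduce:
  assumes j: "j < length gs" and p: "\<forall>i. coeff p i \<in> \<rat>" "p \<noteq> 0" "poly p (gs ! j) = 0"
  shows "VV gs D \<subseteq> VV gs (D(j := degree p))"
proof -
  let ?d = "degree p"
  have pw: "gs ! j ^ k \<in> VV gs (\<lambda>i. if i = j then ?d else 1)" for k
  proof -
    have "(\<lambda>k. gs ! j ^ k) ` {..<?d} \<subseteq> monset gs (\<lambda>i. if i = j then ?d else 1)"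
      by (auto simp: mon_single[OF j, symmetric] intro!: monI)
    then have "Q.span ((\<lambda>k. gs ! j ^ k) ` {..<?d}) \<subseteq> VV gs (\<lambda>i. if i = j then ?d else 1)"
      unfolding VV_def by (rule Q.span_mono)
    then show ?thesis using alg_pow_span[OF p] by blast
  qed
  have "monset gs D \<subseteq> VV gs (D(j := ?d))"
  proof
    fix x assume "x \<in> monset gs D"
    then obtain e where e: "x = mon gs e" "\<And>i. i < length gs \<Longrightarrow> e i < D i" by (rule monsetE) auto
    have "x = mon gs (e(j := 0)) * gs ! j ^ e j"
      unfolding e(1) mon_single[OF j, symmetric] mon_mult by (rule mon_cong) auto
    moreover have "mon gs (e(j := 0)) \<in> VV gs (D(j := 1))"
      unfolding VV_def by (rule Q.span_base, rule monI) (use e(2) in auto)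
    ultimately have "x \<in> VV gs (\<lambda>i. (D(j:=1)) i + (if i = j then ?d else 1) - 1)"
      using VV_mult pw by metis
    also have "\<dots> \<subseteq> VV gs (D(j := ?d))" by (rule VV_mono) auto
    finally show "x \<in> VV gs (D(j := ?d))" .
  qed
  then have "Q.span (monset gs D) \<subseteq> Q.span (VV gs (D(j := ?d)))" by (rule Q.span_mono)
  then show ?thesis unfolding VV_span by (simp add: VV_def)
qed


lemma gen_field_subfield: "subfield_C (gen_field S)"
  unfolding gen_field_def subfield_C_def by auto

lemma gen_field_base: "S \<subseteq> gen_field S"
  unfolding gen_field_def by auto

lemma gen_field_least: "subfield_C F \<Longrightarrow> S \<subseteq> F \<Longrightarrow> gen_field S \<subseteq> F"
  unfolding gen_field_def by auto

locale frs =
  fixes ts as :: "complex list" and dg :: "nat \<Rightarrow> nat"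
  assumes red: "\<And>D. VV (ts @ as) D \<subseteq> VV (ts @ as) (\<lambda>j. if j < length ts then D j else dg (j - length ts))"
    and dg_pos: "\<And>k. k < length as \<Longrightarrow> 1 \<le> dg k"
    and as_in: "\<And>k. k < length as \<Longrightarrow> as ! k \<in> VV (ts @ as) (\<lambda>j. if j = length ts + k then dg k else 1)"
begin

definition Dn :: "nat \<Rightarrow> nat \<Rightarrow> nat" where "Dn N j = (if j < length ts then N else dg (j - length ts))"
definition W :: "nat \<Rightarrow> complex set" where "W N = VV (ts @ as) (Dn N)"

lemma Dn_pos: assumes "1 \<le> N" "j < length ts + length as" shows "0 < Dn N j"
proof (cases "j < length ts")
  case False
  then have "j - length ts < length as" using assms(2) by linarith
  then show ?thesis using dg_pos False by (fastforce simp: Dn_def)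
qed (use assms in \<open>auto simp: Dn_def\<close>)

lemma W_mono: "N \<le> N' \<Longrightarrow> W N \<subseteq> W N'"
  unfolding W_def by (rule VV_mono) (auto simp: Dn_def)

lemma W_span: "Q.span (W N) = W N"
  unfolding W_def by (rule VV_span)

lemma W_add: "x \<in> W N \<Longrightarrow> y \<in> W N \<Longrightarrow> x + y \<in> W N"
  by (metis Q.span_add W_span)
lemma W_diff: "x \<in> W N \<Longrightarrow> y \<in> W N \<Longrightarrow> x - y \<in> W N"
  by (metis Q.span_diff W_span)
lemma W_zero: "0 \<in> W N"
  by (metis Q.span_zero W_span)

lemma W_mult: assumes "x \<in> W N" "y \<in> W N'" shows "x * y \<in> W (N + N')"
proof -
  have "x * y \<in> VV (ts @ as) (\<lambda>j. Dn N j + Dn N' j - 1)"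
    using assms unfolding W_def by (rule VV_mult)
  also have "\<dots> \<subseteq> VV (ts @ as) (\<lambda>j. if j < length ts then Dn N j + Dn N' j - 1 else dg (j - length ts))"
    by (rule red)
  also have "\<dots> \<subseteq> W (N + N')"
    unfolding W_def by (rule VV_mono) (auto simp: Dn_def)
  finally show ?thesis .
qed

lemma W_one: assumes "1 \<le> N" shows "1 \<in> W N"
proof -
  have "mon (ts @ as) (\<lambda>_. 0) \<in> monset (ts @ as) (Dn N)"
    by (rule monI) (use Dn_pos[OF assms] in auto)
  moreover have "mon (ts @ as) (\<lambda>_. 0) = 1" by (simp add: mon_def)
  ultimately show ?thesis unfolding W_def VV_def by (metis Q.span_base)
qed

lemma W_pow: "x \<in> W N \<Longrightarrow> x ^ k \<in> W (N * k + 1)"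
proof (induction k)
  case 0 then show ?case using W_one by simp
next
  case (Suc k)
  then have "x * x ^ k \<in> W (N + (N * k + 1))" by (intro W_mult)
  then show ?case by (simp add: algebra_simps)
qed

lemma W_prod: "finite A \<Longrightarrow> (\<And>j. j \<in> A \<Longrightarrow> f j \<in> W B) \<Longrightarrow> prod f A \<in> W (card A * B + 1)"
proof (induction A rule: finite_induct)
  case empty then show ?case using W_one by simp
next
  case (insert x F)
  then have "f x * prod f F \<in> W (B + (card F * B + 1))" by (intro W_mult) auto
  then show ?case using insert by (simp add: algebra_simps)
qed

lemma ts_in: assumes "j < length ts" shows "ts ! j \<in> W 2"
proof -
  have "mon (ts @ as) (\<lambda>i. if i = j then 1 else 0) \<in> monset (ts @ as) (Dn 2)"
  proof (rule monI)
    fix i assume "i < length (ts @ as)"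
    then show "(if i = j then 1 else 0) < Dn 2 i"
      using Dn_pos[of 2 i] assms by (cases "i = j") (auto simp: Dn_def)
  qed
  moreover have "mon (ts @ as) (\<lambda>i. if i = j then 1 else 0) = ts ! j"
    using assms by (simp add: mon_single nth_append)
  ultimately show ?thesis unfolding W_def VV_def by (metis Q.span_base)
qed

lemma as_in': assumes "k < length as" shows "as ! k \<in> W 1"
proof -
  have "VV (ts @ as) (\<lambda>j. if j = length ts + k then dg k else 1) \<subseteq> W 1"
    unfolding W_def by (rule VV_mono) (use dg_pos in \<open>auto simp: Dn_def\<close>)
  then show ?thesis using as_in[OF assms] by blast
qed

lemma prod_Dn: "(\<Prod>j<length ts + r. Dn N j) = N ^ length ts * (\<Prod>k<r. dg k)"
proof (induction r)
  case 0
  have "(\<Prod>j<length ts. Dn N j) = (\<Prod>j<length ts. N)" by (rule prod.cong) (auto simp: Dn_def)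
  then show ?case by simp
next
  case (Suc r)
  then show ?case by (simp add: Dn_def)
qed

lemma card_W: "card (monset (ts @ as) (Dn N)) \<le> N ^ length ts * (\<Prod>k<length as. dg k)"
  using card_monset[of "ts @ as" "Dn N"] prod_Dn[of N "length as"] by simp

definition Fr :: "complex set" where
  "Fr = {z. \<exists>N P Q. P \<in> W N \<and> Q \<in> W N \<and> Q \<noteq> 0 \<and> z = P / Q}"

lemma FrI: assumes "P \<in> W N" "Q \<in> W N'" "Q \<noteq> 0" shows "P / Q \<in> Fr"
proof -
  have "P \<in> W (max N N')" "Q \<in> W (max N N')" using assms W_mono[of N "max N N'"] W_mono[of N' "max N N'"] by auto
  then show ?thesis using assms(3) unfolding Fr_def by blast
qed

lemma FrE: assumes "z \<in> Fr" obtains N P Q where "P \<in> W N" "Q \<in> W N" "Q \<noteq> 0" "z = P / Q"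
  using assms unfolding Fr_def by blast

lemma Fr_subfield: "subfield_C Fr"
  unfolding subfield_C_def
proof (intro conjI ballI impI)
  show "0 \<in> Fr" using FrI[OF W_zero W_one[of 1]] by simp
  show "1 \<in> Fr" using FrI[OF W_one[of 1] W_one[of 1]] by simp
  fix x y assume x: "x \<in> Fr" and y: "y \<in> Fr"
  from x obtain N1 P1 Q1 where 1: "P1 \<in> W N1" "Q1 \<in> W N1" "Q1 \<noteq> 0" "x = P1 / Q1" by (rule FrE)
  from y obtain N2 P2 Q2 where 2: "P2 \<in> W N2" "Q2 \<in> W N2" "Q2 \<noteq> 0" "y = P2 / Q2" by (rule FrE)
  have QQ: "Q1 * Q2 \<in> W (N1 + N2)" "Q1 * Q2 \<noteq> 0" using 1 2 W_mult by auto
  have a: "P1 * Q2 \<in> W (N1 + N2)" "P2 * Q1 \<in> W (N1 + N2)" using 1 2 W_mult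
    by (auto, metis add.commute W_mult)
  have "x + y = (P1 * Q2 + P2 * Q1) / (Q1 * Q2)" using 1 2 by (simp add: field_simps)
  then show "x + y \<in> Fr" using FrI[OF W_add[OF a] QQ] by simp
  have "x - y = (P1 * Q2 - P2 * Q1) / (Q1 * Q2)" using 1 2 by (simp add: field_simps)
  then show "x - y \<in> Fr" using FrI[OF W_diff[OF a] QQ] by simp
  have "x * y = (P1 * P2) / (Q1 * Q2)" using 1 2 by simp
  then show "x * y \<in> Fr" using FrI[OF W_mult[OF 1(1) 2(1)] QQ] by simp
next
  fix x assume x: "x \<in> Fr" "x \<noteq> 0"
  from x(1) obtain N1 P1 Q1 where 1: "P1 \<in> W N1" "Q1 \<in> W N1" "Q1 \<noteq> 0" "x = P1 / Q1" by (rule FrE)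
  have "P1 \<noteq> 0" using 1 x by auto
  moreover have "inverse x = Q1 / P1" using 1 by simp
  ultimately show "inverse x \<in> Fr" using FrI[OF 1(2) 1(1)] by simp
qed

lemma gen_sub_Fr: "gen_field (set ts \<union> set as) \<subseteq> Fr"
proof (rule gen_field_least[OF Fr_subfield])
  show "set ts \<union> set as \<subseteq> Fr"
  proof
    fix z assume "z \<in> set ts \<union> set as"
    then show "z \<in> Fr"
    proof
      assume "z \<in> set ts"
      then obtain j where "j < length ts" "z = ts ! j" by (metis in_set_conv_nth)
      then show ?thesis using FrI[OF ts_in W_one[of 1]] by fastforce
    next
      assume "z \<in> set as"
      then obtain j where "j < length as" "z = as ! j" by (metis in_set_conv_nth)
      then show ?thesis using FrI[OF as_in' W_one[of 1]] by fastforce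
    qed
  qed
qed

end


lemma alg_indepD:
  assumes "alg_indep_Q xs" "finite E" "\<And>\<alpha> i. \<alpha> \<in> E \<Longrightarrow> length xs \<le> i \<Longrightarrow> \<alpha> i = 0"
    "(\<Sum>\<alpha>\<in>E. of_rat (c \<alpha>) * (\<Prod>i<length xs. (xs ! i) ^ \<alpha> i)) = 0" "\<alpha> \<in> E"
  shows "c \<alpha> = 0"
  using assms unfolding alg_indep_Q_def by blast

context frs begin

lemma no_indep:
  assumes len: "length ys = length ts + 1" and sub: "set ys \<subseteq> Fr"
  shows "\<not> alg_indep_Q ys"
proof
  assume ind: "alg_indep_Q ys"
  define n where "n = length ys"
  define m where "m = length ts"
  have nm: "n = Suc m" using len unfolding n_def m_def by simp
  have "\<forall>j<n. \<exists>N P Q. P \<in> W N \<and> Q \<in> W N \<and> Q \<noteq> 0 \<and> ys ! j = P / Q"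
    using sub unfolding n_def Fr_def by (auto simp: subset_iff)
  then obtain Nf Pf Qf where NPQ: "\<And>j. j < n \<Longrightarrow> Pf j \<in> W (Nf j) \<and> Qf j \<in> W (Nf j) \<and> Qf j \<noteq> 0 \<and> ys ! j = Pf j / Qf j"
    by metis
  define N where "N = (\<Sum>j<n. Nf j) + 1"
  have PQ: "Pf j \<in> W N" "Qf j \<in> W N" "Qf j \<noteq> 0" "ys ! j = Pf j / Qf j" if "j < n" for j
  proof -
    have "Nf j \<le> (\<Sum>j<n. Nf j)" using that by (intro member_le_sum) auto
    then have "Nf j \<le> N" unfolding N_def by simp
    then show "Pf j \<in> W N" "Qf j \<in> W N" using NPQ[OF that] W_mono by auto
    show "Qf j \<noteq> 0" "ys ! j = Pf j / Qf j" using NPQ[OF that] by auto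
  qed
  define C where "C = (\<Prod>k<length as. dg k)"
  define K0 where "K0 = n * (N + 2) + 1"
  define Dd where "Dd = K0 ^ m * C"
  define L where "L = n * (N * Dd + 2) + 1"
  define Bs where "Bs = {\<beta>::nat\<Rightarrow>nat. (\<forall>j<n. \<beta> j \<le> Dd) \<and> (\<forall>j. n \<le> j \<longrightarrow> \<beta> j = 0)}"
  define yb where "yb \<beta> = (\<Prod>i<n. ys ! i ^ \<beta> i)" for \<beta> :: "nat \<Rightarrow> nat"
  define v where "v \<beta> = (\<Prod>j<n. Pf j ^ \<beta> j * Qf j ^ (Dd - \<beta> j))" for \<beta> :: "nat \<Rightarrow> nat"
  define QD where "QD = (\<Prod>j<n. Qf j ^ Dd)"
  have QD0: "QD \<noteq> 0" using PQ(3) unfolding QD_def by simp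
  have key: "v \<beta> = yb \<beta> * QD" if "\<beta> \<in> Bs" for \<beta>
  proof -
    have "v \<beta> = (\<Prod>j<n. ys ! j ^ \<beta> j * Qf j ^ Dd)"
      unfolding v_def
    proof (rule prod.cong)
      fix j assume j: "j \<in> {..<n}"
      have Pf: "Pf j = ys ! j * Qf j" using PQ(3,4)[of j] j by simp
      have b: "\<beta> j \<le> Dd" using that j unfolding Bs_def by auto
      have "Pf j ^ \<beta> j * Qf j ^ (Dd - \<beta> j) = ys ! j ^ \<beta> j * Qf j ^ (\<beta> j + (Dd - \<beta> j))"
        unfolding Pf by (simp add: power_mult_distrib mult.assoc power_add)
      then show "Pf j ^ \<beta> j * Qf j ^ (Dd - \<beta> j) = ys ! j ^ \<beta> j * Qf j ^ Dd"
        using b by simp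
    qed simp
    then show ?thesis unfolding yb_def QD_def by (simp add: prod.distrib)
  qed
  have vin: "v \<beta> \<in> W L" if "\<beta> \<in> Bs" for \<beta>
  proof -
    have "v \<beta> \<in> W (card {..<n} * (N * Dd + 2) + 1)"
      unfolding v_def
    proof (rule W_prod)
      fix j assume j: "j \<in> {..<n}"
      have b: "\<beta> j \<le> Dd" using that j unfolding Bs_def by auto
      have "Pf j ^ \<beta> j * Qf j ^ (Dd - \<beta> j) \<in> W ((N * \<beta> j + 1) + (N * (Dd - \<beta> j) + 1))"
        using PQ j by (intro W_mult W_pow) auto
      moreover have "N * \<beta> j + N * (Dd - \<beta> j) = N * Dd"
        using b by (metis add_mult_distrib2 le_add_diff_inverse)
      ultimately show "Pf j ^ \<beta> j * Qf j ^ (Dd - \<beta> j) \<in> W (N * Dd + 2)"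
        by (simp add: algebra_simps)
    qed simp
    then show ?thesis by (simp add: L_def)
  qed
  have finB: "finite Bs" and cardB: "(Dd + 1) ^ n \<le> card Bs"
  proof -
    define ext where "ext f = (\<lambda>j. if j < n then f j else 0)" for f :: "nat \<Rightarrow> nat"
    define PE where "PE = PiE {..<n} (\<lambda>_. {..Dd})"
    have "Bs \<subseteq> ext ` PE"
    proof
      fix \<beta> assume b: "\<beta> \<in> Bs"
      have "\<beta> = ext (restrict \<beta> {..<n})" using b unfolding ext_def Bs_def by (auto simp: fun_eq_iff)
      moreover have "restrict \<beta> {..<n} \<in> PE" using b unfolding PE_def Bs_def by auto
      ultimately show "\<beta> \<in> ext ` PE" by blast
    qed
    moreover have finPE: "finite PE" unfolding PE_def by (intro finite_PiE) auto
    ultimately show finB: "finite Bs" by (meson finite_imageI finite_subset)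
    have inj: "inj_on ext PE"
    proof (rule inj_onI)
      fix f g assume f: "f \<in> PE" and g: "g \<in> PE" and e: "ext f = ext g"
      show "f = g"
      proof (rule PiE_ext[OF f[unfolded PE_def] g[unfolded PE_def]])
        fix j assume "j \<in> {..<n}"
        then show "f j = g j" using fun_cong[OF e, of j] unfolding ext_def by simp
      qed
    qed
    have sub: "ext ` PE \<subseteq> Bs"
    proof
      fix x assume "x \<in> ext ` PE"
      then obtain f where f: "f \<in> PE" "x = ext f" by blast
      have "f j \<le> Dd" if "j < n" for j using f(1) that unfolding PE_def by (auto simp: PiE_iff)
      then show "x \<in> Bs" unfolding Bs_def f(2) ext_def by auto
    qed
    have "card PE = (Dd + 1) ^ n" unfolding PE_def by (simp add: card_PiE)
    then show "(Dd + 1) ^ n \<le> card Bs" using card_inj_on_le[OF inj sub finB] by simp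
  qed
  have cardM: "card (monset (ts @ as) (Dn L)) < card Bs"
  proof -
    have h: "N * Dd + 2 \<le> (N + 2) * (Dd + 1)" by (simp add: algebra_simps)
    have h2: "n * (N * Dd + 2) \<le> n * ((N + 2) * (Dd + 1))" using h by (rule mult_le_mono2)
    have h3: "(n * (N + 2) + 1) * (Dd + 1) = n * ((N + 2) * (Dd + 1)) + (Dd + 1)"
      by (simp add: algebra_simps)
    have LK: "L \<le> K0 * (Dd + 1)" unfolding L_def K0_def h3 using h2 by linarith
    have "card (monset (ts @ as) (Dn L)) \<le> L ^ m * C" using card_W[of L] unfolding C_def m_def .
    also have "\<dots> \<le> (K0 * (Dd + 1)) ^ m * C" using LK by (intro mult_right_mono power_mono) auto
    also have "\<dots> = (K0 ^ m * C) * (Dd + 1) ^ m" by (simp only: power_mult_distrib mult.commute mult.left_commute mult.assoc)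
    also have "\<dots> = Dd * (Dd + 1) ^ m" by (simp add: Dd_def)
    also have "\<dots> < (Dd + 1) * (Dd + 1) ^ m" by simp
    also have "\<dots> = (Dd + 1) ^ n" by (simp add: nm)
    also have "\<dots> \<le> card Bs" by (rule cardB)
    finally show ?thesis .
  qed
  have spanv: "v ` Bs \<subseteq> Q.span (monset (ts @ as) (Dn L))" using vin unfolding W_def VV_def by auto
  have indE: "c \<alpha> = 0" if "finite E" "E \<subseteq> Bs" "(\<Sum>\<alpha>\<in>E. of_rat (c \<alpha>) * yb \<alpha>) = 0" "\<alpha> \<in> E" for E c \<alpha>
  proof (rule alg_indepD[OF ind that(1) _ _ that(4)])
    show "\<And>\<alpha> i. \<alpha> \<in> E \<Longrightarrow> length ys \<le> i \<Longrightarrow> \<alpha> i = 0" using that(2) unfolding Bs_def n_def by auto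
    show "(\<Sum>\<alpha>\<in>E. of_rat (c \<alpha>) * (\<Prod>i<length ys. ys ! i ^ \<alpha> i)) = 0" using that(3) unfolding yb_def n_def .
  qed
  show False
  proof (cases "inj_on v Bs")
    case True
    have "card (v ` Bs) = card Bs" using True by (simp add: card_image)
    then have dep: "Q.dependent (v ` Bs)"
      using Q.independent_span_bound[OF finite_monset _ spanv] cardM by fastforce
    then obtain T u where T: "finite T" "T \<subseteq> v ` Bs" "(\<Sum>w\<in>T. of_rat (u w) * w) = 0" "\<exists>w\<in>T. u w \<noteq> 0"
      unfolding Q.dependent_explicit by blast
    define E where "E = {\<beta>\<in>Bs. v \<beta> \<in> T}"
    have injE: "inj_on v E" using True unfolding E_def by (rule inj_on_subset) auto
    have TE: "T = v ` E" using T(2) unfolding E_def by auto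
    have finE: "finite E" using finB unfolding E_def by auto
    have "(\<Sum>\<beta>\<in>E. of_rat (u (v \<beta>)) * yb \<beta>) * QD = (\<Sum>\<beta>\<in>E. of_rat (u (v \<beta>)) * v \<beta>)"
      unfolding sum_distrib_right by (rule sum.cong) (auto simp: key E_def mult.assoc)
    also have "\<dots> = (\<Sum>w\<in>T. of_rat (u w) * w)" unfolding TE using injE by (simp add: sum.reindex)
    also have "\<dots> = 0" by (rule T(3))
    finally have S0: "(\<Sum>\<beta>\<in>E. of_rat (u (v \<beta>)) * yb \<beta>) = 0" using QD0 by simp
    have "\<forall>\<alpha>\<in>E. u (v \<alpha>) = 0"
      using indE[OF finE _ S0] unfolding E_def by auto
    then show False using T(4) TE by auto
  next
    case False
    then obtain b1 b2 where b: "b1 \<in> Bs" "b2 \<in> Bs" "b1 \<noteq> b2" "v b1 = v b2" unfolding inj_on_def by blast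
    have "yb b1 = yb b2" using key[OF b(1)] key[OF b(2)] b(4) QD0 by simp
    then have "(\<Sum>\<beta>\<in>{b1,b2}. of_rat (if \<beta> = b1 then 1 else -1) * yb \<beta>) = 0" using b(3) by simp
    then have "(if b1 = b1 then 1 else (-1::rat)) = 0" using indE[where c="\<lambda>\<beta>. if \<beta> = b1 then 1 else -1" and E="{b1,b2}" and \<alpha>=b1] b by auto
    then show False by simp
  qed
qed

lemma no_trdeg:
  assumes "S \<subseteq> gen_field (set ts \<union> set as)"
  shows "\<not> trdeg_ge (gen_field S) (length ts + 1)"
proof
  assume "trdeg_ge (gen_field S) (length ts + 1)"
  then obtain ys where ys: "set ys \<subseteq> gen_field S" "length ys = length ts + 1" "alg_indep_Q ys"
    unfolding trdeg_ge_def by blast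
  have "gen_field S \<subseteq> gen_field (set ts \<union> set as)"
    using assms by (rule gen_field_least[OF gen_field_subfield])
  then have "set ys \<subseteq> Fr" using ys(1) gen_sub_Fr by blast
  then show False using no_indep[OF ys(2)] ys(3) by blast
qed

end


lemma pw_VV:
  assumes j: "j < length gs" and p: "\<forall>i. coeff p i \<in> \<rat>" "p \<noteq> 0" "poly p (gs ! j) = 0"
  shows "gs ! j ^ k \<in> VV gs (\<lambda>i. if i = j then degree p else 1)"
proof -
  have "(\<lambda>k. gs ! j ^ k) ` {..<degree p} \<subseteq> monset gs (\<lambda>i. if i = j then degree p else 1)"
    by (auto simp: mon_single[OF j, symmetric] intro!: monI)
  then have "Q.span ((\<lambda>k. gs ! j ^ k) ` {..<degree p}) \<subseteq> VV gs (\<lambda>i. if i = j then degree p else 1)"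
    unfolding VV_def by (rule Q.span_mono)
  then show ?thesis using alg_pow_span[OF p] by blast
qed

lemma frs_exists:
  assumes alg: "\<forall>a\<in>set as. algebraic a"
  shows "\<exists>dg. frs ts as dg"
proof -
  have "\<forall>k<length as. \<exists>p. (\<forall>i. coeff p i \<in> \<rat>) \<and> p \<noteq> 0 \<and> poly p (as ! k) = (0::complex)"
    using alg unfolding algebraic_altdef by auto
  then obtain P where P: "\<And>k. k < length as \<Longrightarrow> (\<forall>i. coeff (P k) i \<in> \<rat>) \<and> P k \<noteq> 0 \<and> poly (P k) (as ! k) = (0::complex)"
    by metis
  define dg where "dg k = degree (P k)" for k
  have dgk: "dg k = degree (P k)" for k by (simp add: dg_def)
  define m where "m = length ts"
  have nth: "(ts @ as) ! (m + k) = as ! k" for k unfolding m_def by (simp add: nth_append)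
  have P': "\<forall>i. coeff (P k) i \<in> \<rat>" "P k \<noteq> 0" "poly (P k) ((ts @ as) ! (m + k)) = 0" if "k < length as" for k
    using P[OF that] by (auto simp: nth)
  have step: "k \<le> length as \<Longrightarrow> VV (ts @ as) D \<subseteq> VV (ts @ as) (\<lambda>j. if m \<le> j \<and> j < m + k then dg (j - m) else D j)" for k D
  proof (induction k)
    case 0
    have "(\<lambda>j. if m \<le> j \<and> j < m + 0 then dg (j - m) else D j) = D" by auto
    then show ?case by simp
  next
    case (Suc k)
    then have k: "k < length as" by simp
    have "VV (ts @ as) D \<subseteq> VV (ts @ as) (\<lambda>j. if m \<le> j \<and> j < m + k then dg (j - m) else D j)"
      using Suc by simp
    also have "\<dots> \<subseteq> VV (ts @ as) ((\<lambda>j. if m \<le> j \<and> j < m + k then dg (j - m) else D j)(m + k := degree (P k)))"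
      by (rule VV_reduce[OF _ P'[OF k]]) (use k in \<open>simp add: m_def\<close>)
    also have "(\<lambda>j. if m \<le> j \<and> j < m + k then dg (j - m) else D j)(m + k := degree (P k))
       = (\<lambda>j. if m \<le> j \<and> j < m + Suc k then dg (j - m) else D j)"
      by (auto simp: fun_eq_iff dg_def)
    finally show ?case .
  qed
  have "frs ts as dg"
  proof
    fix D
    have "VV (ts @ as) D \<subseteq> VV (ts @ as) (\<lambda>j. if m \<le> j \<and> j < m + length as then dg (j - m) else D j)"
      by (rule step) simp
    also have "\<dots> \<subseteq> VV (ts @ as) (\<lambda>j. if j < length ts then D j else dg (j - length ts))"
      by (rule VV_mono) (auto simp: m_def)
    finally show "VV (ts @ as) D \<subseteq> VV (ts @ as) (\<lambda>j. if j < length ts then D j else dg (j - length ts))" .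
  next
    fix k assume k: "k < length as"
    show "1 \<le> dg k"
    proof (rule ccontr)
      assume "\<not> 1 \<le> dg k"
      then have d0: "degree (P k) = 0" by (simp add: dg_def)
      have "poly (P k) (as ! k) = coeff (P k) 0" using d0 by (simp add: poly_altdef)
      moreover have "coeff (P k) 0 \<noteq> 0" using P[OF k] d0 by (metis leading_coeff_0_iff)
      ultimately show False using P[OF k] by simp
    qed
    show "as ! k \<in> VV (ts @ as) (\<lambda>j. if j = length ts + k then dg k else 1)"
      using pw_VV[OF _ P'[OF k], of 1] k unfolding dgk by (simp add: nth m_def)
  qed
  then show ?thesis by blast
qed

lemma schanuel_bound:
  assumes S: "schanuel" and li: "lin_indep_Q xs" and alg: "\<forall>a\<in>set as. algebraic a"
    and sub: "set xs \<union> exp ` set xs \<subseteq> gen_field (set ts \<union> set as)"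
    and len: "length xs = length ts + 1"
  shows False
proof -
  obtain dg where "frs ts as dg" using frs_exists[OF alg] by blast
  then interpret frs ts as dg .
  have "trdeg_ge (gen_field (set xs \<union> exp ` set xs)) (length xs)"
    using S li unfolding schanuel_def by blast
  then show False using no_trdeg[OF sub] len by simp
qed

lemma gf_base: "x \<in> S \<Longrightarrow> x \<in> gen_field S" using gen_field_base by blast
lemma gf_add: "x \<in> gen_field S \<Longrightarrow> y \<in> gen_field S \<Longrightarrow> x + y \<in> gen_field S"
  using gen_field_subfield[of S] unfolding subfield_C_def by blast
lemma gf_mult: "x \<in> gen_field S \<Longrightarrow> y \<in> gen_field S \<Longrightarrow> x * y \<in> gen_field S"
  using gen_field_subfield[of S] unfolding subfield_C_def by blast
lemma gf_one: "1 \<in> gen_field S"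
  using gen_field_subfield[of S] unfolding subfield_C_def by blast
lemma gf_inverse: "x \<in> gen_field S \<Longrightarrow> inverse x \<in> gen_field S"
  using gen_field_subfield[of S] unfolding subfield_C_def by (cases "x = 0") auto

lemma cor_rat: "complex_of_real (of_rat q) = of_rat q"
  by (cases q) (simp add: of_rat_rat)

lemma sqrt2_irr: "sqrt 2 \<notin> \<rat>"
proof
  have p: "(2::nat) > 1" by simp
  assume "sqrt 2 \<in> \<rat>"
  then obtain m n :: nat
    where n: "n \<noteq> 0" and sqrt_rat: "\<bar>sqrt 2\<bar> = m / n" and "coprime m n" by (rule Rats_abs_nat_div_natE)
  have eq: "m\<^sup>2 = 2 * n\<^sup>2"
  proof -
    from n and sqrt_rat have "m = \<bar>sqrt 2\<bar> * n" by simp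
    then have "real (m\<^sup>2) = (sqrt 2)\<^sup>2 * real (n\<^sup>2)" by (simp add: power_mult_distrib)
    also have "(sqrt 2)\<^sup>2 = 2" by simp
    finally show ?thesis by (simp only: of_nat_eq_iff[symmetric])
  qed
  have pr: "prime (2::nat)" by simp
  have "2 dvd m \<and> 2 dvd n"
  proof
    from eq have "2 dvd m\<^sup>2" ..
    with pr show "2 dvd m" by (rule prime_dvd_power)
    then obtain k where "m = 2 * k" ..
    with eq have "2 * n\<^sup>2 = 2\<^sup>2 * k\<^sup>2" by algebra
    then have "n\<^sup>2 = 2 * k\<^sup>2" by (simp add: power2_eq_square)
    then have "2 dvd n\<^sup>2" ..
    with pr show "2 dvd n" by (rule prime_dvd_power)
  qed
  then have "2 dvd gcd m n" by simp
  with \<open>coprime m n\<close> show False by simp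
qed



lemma exp_ii_half: "exp (\<i> * complex_of_real (pi / 2)) = \<i>"
  using exp_Ln[of \<i>] by simp

lemma lin_two:
  assumes c: "c \<noteq> 0"
  shows "lin_indep_Q [complex_of_real c, \<i> * complex_of_real c]"
  unfolding lin_indep_Q_def
proof (rule allI, rule impI)
  fix q :: "nat \<Rightarrow> rat"
  assume "(\<Sum>i<length [complex_of_real c, \<i> * complex_of_real c].
          of_rat (q i) * [complex_of_real c, \<i> * complex_of_real c] ! i) = 0"
  then have h: "complex_of_real (of_rat (q 0)) * complex_of_real c + complex_of_real (of_rat (q 1)) * (\<i> * complex_of_real c) = 0"
    by (simp add: cor_rat eval_nat_numeral)
  have "of_rat (q 0) * c = 0" "of_rat (q 1) * c = 0"
    using arg_cong[OF h, of Re] arg_cong[OF h, of Im] by simp_all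
  then have "q 0 = 0" "q 1 = 0" using c by simp_all
  then show "\<forall>i<length [complex_of_real c, \<i> * complex_of_real c]. q i = 0"
    by (simp add: less_Suc_eq eval_nat_numeral)
qed

lemma exp_half_pi_transc:
  assumes S: "schanuel"
  shows "\<not> algebraic (complex_of_real (exp (pi / 2)))"
proof
  define c where "c = complex_of_real (pi / 2)"
  define E where "E = complex_of_real (exp (pi / 2))"
  assume "algebraic (complex_of_real (exp (pi / 2)))"
  then have alg: "algebraic E" by (simp add: E_def)
  have e1: "exp c = E" unfolding c_def E_def by (simp only: exp_of_real)
  have e2: "exp (\<i> * c) = \<i>" unfolding c_def by (rule exp_ii_half)
  have li: "lin_indep_Q [c, \<i> * c]" unfolding c_def by (rule lin_two) simp
  show False
  proof (rule schanuel_bound[OF S li, where ts = "[c]" and as = "[\<i>, E]"])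
    show "\<forall>a\<in>set [\<i>, E]. algebraic a" using alg by simp
    show "set [c, \<i> * c] \<union> exp ` set [c, \<i> * c] \<subseteq> gen_field (set [c] \<union> set [\<i>, E])"
    proof -
      let ?G = "gen_field (set [c] \<union> set [\<i>, E])"
      have g: "c \<in> ?G" "\<i> \<in> ?G" "E \<in> ?G" by (auto intro: gf_base)
      show ?thesis using g by (auto simp: e1 e2 intro: gf_mult)
    qed
  qed simp
qed


lemma lin_three:
  assumes c: "c \<noteq> 0" and u: "u \<notin> \<rat>"
  shows "lin_indep_Q [complex_of_real c, \<i> * complex_of_real c, complex_of_real u * \<i> * complex_of_real c]"
  unfolding lin_indep_Q_def
proof (rule allI, rule impI)
  fix q :: "nat \<Rightarrow> rat"
  assume "(\<Sum>i<length [complex_of_real c, \<i> * complex_of_real c, complex_of_real u * \<i> * complex_of_real c].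
          of_rat (q i) * [complex_of_real c, \<i> * complex_of_real c, complex_of_real u * \<i> * complex_of_real c] ! i) = 0"
  then have h: "complex_of_real (of_rat (q 0)) * complex_of_real c + complex_of_real (of_rat (q 1)) * (\<i> * complex_of_real c)
      + complex_of_real (of_rat (q 2)) * (complex_of_real u * \<i> * complex_of_real c) = 0"
    by (simp add: cor_rat eval_nat_numeral)
  have "of_rat (q 0) * c = 0" "(of_rat (q 1) + of_rat (q 2) * u) * c = 0"
    using arg_cong[OF h, of Re] arg_cong[OF h, of Im] by (simp_all add: algebra_simps)
  then have q0: "q 0 = 0" and q12: "of_rat (q 1) + of_rat (q 2) * u = 0" using c by simp_all
  have q2: "q 2 = 0"
  proof (rule ccontr)
    assume "q 2 \<noteq> 0"
    then have "u = of_rat (- q 1 / q 2)" using q12 by (simp add: of_rat_divide of_rat_minus field_simps)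
    then show False using u by (metis Rats_of_rat)
  qed
  then have "q 1 = 0" using q12 by simp
  with q0 q2 show "\<forall>i<length [complex_of_real c, \<i> * complex_of_real c, complex_of_real u * \<i> * complex_of_real c]. q i = 0"
    by (simp add: less_Suc_eq eval_nat_numeral)
qed

lemma case23:
  assumes S: "schanuel" and c: "c = complex_of_real (pi / 2)" and E: "E = complex_of_real (exp (pi / 2))"
    and u: "u \<notin> \<rat>" and ug: "complex_of_real u \<in> gen_field (set [c, E] \<union> set [\<i>, X])"
    and X: "X = exp (complex_of_real u * \<i> * c)" and alg: "algebraic X"
  shows False
proof (rule schanuel_bound[OF S, where xs = "[c, \<i> * c, complex_of_real u * \<i> * c]" and ts = "[c, E]" and as = "[\<i>, X]"])
  show "lin_indep_Q [c, \<i> * c, complex_of_real u * \<i> * c]" unfolding c by (rule lin_three) (simp_all add: u)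
  show "\<forall>a\<in>set [\<i>, X]. algebraic a" using alg by simp
  have e1: "exp c = E" unfolding c E by (simp only: exp_of_real)
  have e2: "exp (\<i> * c) = \<i>" unfolding c by (rule exp_ii_half)
  let ?G = "gen_field (set [c, E] \<union> set [\<i>, X])"
  have g: "c \<in> ?G" "\<i> \<in> ?G" "E \<in> ?G" "X \<in> ?G" by (auto intro: gf_base)
  show "set [c, \<i> * c, complex_of_real u * \<i> * c] \<union> exp ` set [c, \<i> * c, complex_of_real u * \<i> * c] \<subseteq> ?G"
    using g ug by (auto simp: e1 e2 X[symmetric] intro: gf_mult)
qed simp

lemma ii_powr_real: "\<i> powr complex_of_real u = exp (complex_of_real u * \<i> * complex_of_real (pi / 2))"
  by (simp add: powr_def mult.assoc)

lemma ii_powr_ii: "\<i> powr \<i> = complex_of_real (exp (- (pi / 2)))"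
proof -
  have "\<i> powr \<i> = exp (\<i> * Ln \<i>)" by (simp add: powr_def)
  also have "\<i> * Ln \<i> = complex_of_real (- (pi / 2))" by simp
  finally show ?thesis by (simp only: exp_of_real)
qed

lemma case3:
  assumes S: "schanuel"
  shows "\<not> algebraic (\<i> powr complex_of_real (exp pi))"
proof
  assume alg: "algebraic (\<i> powr complex_of_real (exp pi))"
  have T: "\<not> algebraic (exp (pi / 2))" using exp_half_pi_transc[OF S] by simp
  have sq: "sqrt (exp pi) = exp (pi / 2)"
  proof (rule real_sqrt_unique)
    show "exp (pi / 2) ^ 2 = exp pi" by (simp add: power2_eq_square exp_add[symmetric])
  qed simp
  have u: "exp pi \<notin> \<rat>"
  proof
    assume "exp pi \<in> \<rat>"
    then have "algebraic (sqrt (exp pi))" by (intro algebraic_sqrt rat_imp_algebraic)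
    then show False using T sq by simp
  qed
  show False
  proof (rule case23[OF S refl refl u _ ii_powr_real alg])
    let ?c = "complex_of_real (pi / 2)" and ?E = "complex_of_real (exp (pi / 2))"
    let ?X = "\<i> powr complex_of_real (exp pi)"
    have Eg: "?E \<in> gen_field (set [?c, ?E] \<union> set [\<i>, ?X])" by (rule gf_base) simp
    have "?E * ?E \<in> gen_field (set [?c, ?E] \<union> set [\<i>, ?X])" by (rule gf_mult[OF Eg Eg])
    moreover have "?E * ?E = complex_of_real (exp pi)"
      by (simp only: of_real_mult[symmetric] exp_add[symmetric]) simp
    ultimately show "complex_of_real (exp pi) \<in> gen_field (set [?c, ?E] \<union> set [\<i>, ?X])" by simp
  qed
qed

lemma case2:
  assumes S: "schanuel"
  shows "\<not> algebraic (\<i> powr (\<i> powr \<i>))"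
proof
  assume "algebraic (\<i> powr (\<i> powr \<i>))"
  then have alg: "algebraic (\<i> powr complex_of_real (exp (- (pi / 2))))" by (simp only: ii_powr_ii)
  have T: "\<not> algebraic (exp (pi / 2))" using exp_half_pi_transc[OF S] by simp
  have u: "exp (- (pi / 2)) \<notin> \<rat>"
  proof
    assume "exp (- (pi / 2)) \<in> \<rat>"
    then have "algebraic (inverse (exp (- (pi / 2))))" by (intro algebraic_inverse rat_imp_algebraic)
    then show False using T by (simp add: exp_minus)
  qed
  show False
  proof (rule case23[OF S refl refl u _ ii_powr_real alg])
    let ?c = "complex_of_real (pi / 2)" and ?E = "complex_of_real (exp (pi / 2))"
    let ?X = "\<i> powr complex_of_real (exp (- (pi / 2)))"
    have "?E \<in> gen_field (set [?c, ?E] \<union> set [\<i>, ?X])" by (rule gf_base) simp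
    then have "inverse ?E \<in> gen_field (set [?c, ?E] \<union> set [\<i>, ?X])" by (rule gf_inverse)
    moreover have "inverse ?E = complex_of_real (exp (- (pi / 2)))"
      by (simp only: of_real_inverse[symmetric] exp_minus)
    ultimately show "complex_of_real (exp (- (pi / 2))) \<in> gen_field (set [?c, ?E] \<union> set [\<i>, ?X])" by simp
  qed
qed


lemma alg_ab: "algebraic (of_rat a + of_rat b * sqrt 2 :: real)"
proof -
  define x where "x = (of_rat a + of_rat b * sqrt 2 :: real)"
  define p where "p = [:(of_rat a)^2 - 2 * (of_rat b)^2, - 2 * of_rat a, 1 :: real:]"
  have s2: "sqrt 2 * sqrt 2 = (2::real)" by simp
  have "poly p x = (of_rat b)^2 * (sqrt 2 * sqrt 2 - 2)"
    unfolding p_def x_def by (simp add: algebra_simps power2_eq_square)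
  then have "poly p x = 0" using s2 by simp
  moreover have "p \<noteq> 0" unfolding p_def by simp
  moreover have "\<forall>i. coeff p i \<in> \<rat>"
  proof
    fix i show "coeff p i \<in> \<rat>"
      unfolding p_def by (cases i; cases "i - 1"; cases "i - 2") (auto simp: coeff_pCons)
  qed
  ultimately show ?thesis unfolding x_def by (intro algebraicI') auto
qed

lemma lin_two_r:
  assumes l: "l \<noteq> 0" and s: "s \<notin> \<rat>"
  shows "lin_indep_Q [complex_of_real l, complex_of_real s * complex_of_real l]"
  unfolding lin_indep_Q_def
proof (rule allI, rule impI)
  fix q :: "nat \<Rightarrow> rat"
  assume "(\<Sum>i<length [complex_of_real l, complex_of_real s * complex_of_real l].
          of_rat (q i) * [complex_of_real l, complex_of_real s * complex_of_real l] ! i) = 0"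
  then have h: "complex_of_real (of_rat (q 0)) * complex_of_real l + complex_of_real (of_rat (q 1)) * (complex_of_real s * complex_of_real l) = 0"
    by (simp add: cor_rat eval_nat_numeral)
  have "(of_rat (q 0) + of_rat (q 1) * s) * l = 0"
    using arg_cong[OF h, of Re] by (simp add: algebra_simps)
  then have q01: "of_rat (q 0) + of_rat (q 1) * s = 0" using l by simp
  have q1: "q 1 = 0"
  proof (rule ccontr)
    assume "q 1 \<noteq> 0"
    then have "s = of_rat (- q 0 / q 1)" using q01 by (simp add: of_rat_divide of_rat_minus field_simps)
    then show False using s by (metis Rats_of_rat)
  qed
  then have "q 0 = 0" using q01 by simp
  with q1 show "\<forall>i<length [complex_of_real l, complex_of_real s * complex_of_real l]. q i = 0"
    by (simp add: less_Suc_eq eval_nat_numeral)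
qed

lemma lin_three_r:
  assumes l: "l \<noteq> 0" and s: "s \<notin> \<rat>" and y: "\<And>a b. y \<noteq> of_rat a + of_rat b * s"
  shows "lin_indep_Q [complex_of_real l, complex_of_real s * complex_of_real l, complex_of_real y * complex_of_real l]"
  unfolding lin_indep_Q_def
proof (rule allI, rule impI)
  fix q :: "nat \<Rightarrow> rat"
  assume "(\<Sum>i<length [complex_of_real l, complex_of_real s * complex_of_real l, complex_of_real y * complex_of_real l].
          of_rat (q i) * [complex_of_real l, complex_of_real s * complex_of_real l, complex_of_real y * complex_of_real l] ! i) = 0"
  then have h: "complex_of_real (of_rat (q 0)) * complex_of_real l + complex_of_real (of_rat (q 1)) * (complex_of_real s * complex_of_real l)
     + complex_of_real (of_rat (q 2)) * (complex_of_real y * complex_of_real l) = 0"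
    by (simp add: cor_rat eval_nat_numeral)
  have "(of_rat (q 0) + of_rat (q 1) * s + of_rat (q 2) * y) * l = 0"
    using arg_cong[OF h, of Re] by (simp add: algebra_simps)
  then have q012: "of_rat (q 0) + of_rat (q 1) * s + of_rat (q 2) * y = 0" using l by simp
  have q2: "q 2 = 0"
  proof (rule ccontr)
    assume "q 2 \<noteq> 0"
    then have "y = of_rat (- q 0 / q 2) + of_rat (- q 1 / q 2) * s" using q012
      by (simp add: of_rat_divide of_rat_minus field_simps)
    then show False using y by blast
  qed
  then have q01: "of_rat (q 0) + of_rat (q 1) * s = 0" using q012 by simp
  have q1: "q 1 = 0"
  proof (rule ccontr)
    assume "q 1 \<noteq> 0"
    then have "s = of_rat (- q 0 / q 1)" using q01 by (simp add: of_rat_divide of_rat_minus field_simps)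
    then show False using s by (metis Rats_of_rat)
  qed
  then have "q 0 = 0" using q01 by simp
  with q1 q2 show "\<forall>i<length [complex_of_real l, complex_of_real s * complex_of_real l, complex_of_real y * complex_of_real l]. q i = 0"
    by (simp add: less_Suc_eq eval_nat_numeral)
qed

lemma case1:
  assumes S: "schanuel"
  shows "\<not> algebraic (complex_of_real (sqrt 2) powr (complex_of_real (sqrt 2) powr complex_of_real (sqrt 2)))"
proof
  define s where "s = sqrt (2::real)"
  define l where "l = ln (2::real)"
  define Y where "Y = s powr s"
  define Z where "Z = s powr Y"
  have spos: "s > 0" unfolding s_def by simp
  have l0: "l \<noteq> 0" unfolding l_def by simp
  have sirr: "s \<notin> \<rat>" unfolding s_def by (rule sqrt2_irr)
  have lns: "ln s = l / 2" unfolding s_def l_def by (simp add: ln_sqrt)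
  have hY: "Y = exp (s * l / 2)" unfolding Y_def powr_def using spos lns by simp
  have hZ: "Z = exp (Y * l / 2)" unfolding Z_def powr_def using spos lns by simp
  have eY: "exp (s * l) = Y * Y" unfolding hY by (simp add: exp_add[symmetric])
  have eZ: "exp (Y * l) = Z * Z" unfolding hZ by (simp add: exp_add[symmetric])
  have tgt: "complex_of_real (sqrt 2) powr (complex_of_real (sqrt 2) powr complex_of_real (sqrt 2)) = complex_of_real Z"
    unfolding Z_def Y_def s_def by (simp add: powr_of_real)
  assume "algebraic (complex_of_real (sqrt 2) powr (complex_of_real (sqrt 2) powr complex_of_real (sqrt 2)))"
  then have algZ: "algebraic Z" using tgt by simp
  have algs: "algebraic s" unfolding s_def by (intro algebraic_sqrt rat_imp_algebraic) simp
  define L where "L = complex_of_real l"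
  define SC where "SC = complex_of_real s"
  define YC where "YC = complex_of_real Y"
  define ZC where "ZC = complex_of_real Z"
  have e2: "exp L = 2" unfolding L_def l_def by (simp add: exp_of_real)
  have eSL: "exp (SC * L) = YC * YC" unfolding SC_def L_def YC_def
    by (simp only: of_real_mult[symmetric] exp_of_real eY)
  have eYL: "exp (YC * L) = ZC * ZC" unfolding ZC_def L_def YC_def
    by (simp only: of_real_mult[symmetric] exp_of_real eZ)
  have algY: "\<not> algebraic Y"
  proof
    assume algY: "algebraic Y"
    show False
    proof (rule schanuel_bound[OF S, where xs = "[L, SC * L]" and ts = "[L]" and as = "[SC, YC]"])
      show "lin_indep_Q [L, SC * L]" unfolding L_def SC_def by (rule lin_two_r[OF l0 sirr])
      show "\<forall>a\<in>set [SC, YC]. algebraic a" using algs algY by (simp add: SC_def YC_def)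
      let ?G = "gen_field (set [L] \<union> set [SC, YC])"
      have g: "L \<in> ?G" "SC \<in> ?G" "YC \<in> ?G" "2 \<in> ?G"
        using gf_add[OF gf_one gf_one] by (auto intro: gf_base)
      show "set [L, SC * L] \<union> exp ` set [L, SC * L] \<subseteq> ?G"
        using g by (auto simp: e2 eSL intro: gf_mult gf_add)
    qed simp
  qed
  have Yab: "Y \<noteq> of_rat a + of_rat b * s" for a b
    using algY alg_ab[of a b] unfolding s_def by auto
  show False
  proof (rule schanuel_bound[OF S, where xs = "[L, SC * L, YC * L]" and ts = "[L, YC]" and as = "[SC, ZC]"])
    show "lin_indep_Q [L, SC * L, YC * L]" unfolding L_def SC_def YC_def by (rule lin_three_r[OF l0 sirr Yab])
    show "\<forall>a\<in>set [SC, ZC]. algebraic a" using algs algZ by (simp add: SC_def ZC_def)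
    let ?G = "gen_field (set [L, YC] \<union> set [SC, ZC])"
    have g: "L \<in> ?G" "SC \<in> ?G" "YC \<in> ?G" "ZC \<in> ?G" "2 \<in> ?G"
        using gf_add[OF gf_one gf_one] by (auto intro: gf_base)
    show "set [L, SC * L, YC * L] \<union> exp ` set [L, SC * L, YC * L] \<subseteq> ?G"
      using g by (auto simp: e2 eSL eYL intro: gf_mult gf_add)
  qed simp
qed

theorem mainTheorem4:
  assumes "schanuel"
  shows "\<not> algebraic (complex_of_real (sqrt 2) powr (complex_of_real (sqrt 2) powr complex_of_real (sqrt 2))) \<and>
         \<not> algebraic (\<i> powr (\<i> powr \<i>)) \<and>
         \<not> algebraic (\<i> powr complex_of_real (exp pi))"
  using case1[OF assms] case2[OF assms] case3[OF assms] by blast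

end
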